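(* Let $\lambda>0$, let $q:\mathbb{R}\to\mathbb{R}$ be infinitely differentiable and strictly positive, let $x(t)=\int_0^t\sqrt{q(u)}\,du$, and assume $x$ maps $\mathbb{R}$ onto $\mathbb{R}$ (with inverse $t(x)$). Let $p(x)=2\{t,x\}$. Suppose $\sigma\in L^1(\mathbb{R})\cap C(\mathbb{R})$ satisfies $$\sigma(x)=S[T\sigma](x)+p(x)\quad\text{for all }x\in\mathbb{R}.$$ Let $\delta(x)=T\sigma(x)=\frac1{4\lambda}\int_{\mathbb{R}}\sin(2\lambda|x-y|)\sigma(y)\,dy$ and $$\alpha(t)=\lambda\int_0^t\sqrt{q(u)}\exp\!\left(\tfrac{\delta(x(u))}{2}\right)du .$$ Then: (1) $\delta$ is a $C^2$ solution on $\mathbb{R}$ of $\ \delta''(x)-\frac14(\delta'(x))^2+4\lambda^2\left(e^{\delta(x)}-1\right)=p(x)$; (2) the function $\tilde\delta(t)=\delta(x(t))$ is a $C^2$ solution on $\mathbb{R}$ of $$\tilde\delta''(t)-\frac{q'(t)}{2q(t)}\tilde\delta'(t)-\frac14(\tilde\delta'(t))^2+4\lambda^2q(t)\left(e^{\tilde\delta(t)}-1\right)=q(t)\tilde p(t),\qquad \tilde p(t)=\frac{1}{q(t)}\left(\frac54\left(\frac{q'(t)}{q(t)}\right)^2-\frac{q''(t)}{q(t)}\right);$$ (3) $\alpha$ is a $C^3$ solution on $\mathbb{R}$ of Kummer's equation $$(\alpha'(t))^2=\lambda^2q(t)-\frac12\frac{\alpha'''(t)}{\alpha'(t)}+\frac34\left(\frac{\alpha''(t)}{\alpha'(t)}\right)^2;$$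 (4) $\alpha$ is a phase function for $y''(t)+\lambda^2q(t)y(t)=0$ on $[0,1]$.
   Context: The Schwarzian derivative of $f$ with respect to $s$ is $\{f,s\}=\frac{f'''}{f'}-\frac32\left(\frac{f''}{f'}\right)^2$; one has $p(x(t))=\tilde p(t)$. For $f\in C^1(\mathbb{R})$, $S[f](x)=\frac14(f'(x))^2-4\lambda^2\left(e^{f(x)}-1-f(x)\right)$. A sufficiently smooth $\alpha:[0,1]\to\mathbb{R}$ is a phase function for $y''+\lambda^2 q y=0$ on $[0,1]$ if $u=\cos(\alpha)/|\alpha'|^{1/2}$ and $v=\sin(\alpha)/|\alpha'|^{1/2}$ form a basis of the solution space of that equation on $[0,1]$. *)

theory Defs
  imports "HOL-Analysis.Analysis"
begin

definition Ck :: "nat \<Rightarrow> (real \<Rightarrow> real) \<Rightarrow> bool" where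
  "Ck k f \<longleftrightarrow> (\<forall>j<k. \<forall>x. (deriv ^^ j) f differentiable at x)
                 \<and> continuous_on UNIV ((deriv ^^ k) f)"

definition smooth_fun :: "(real \<Rightarrow> real) \<Rightarrow> bool" where
  "smooth_fun f \<longleftrightarrow> (\<forall>k. Ck k f)"

definition sint :: "real \<Rightarrow> real \<Rightarrow> (real \<Rightarrow> real) \<Rightarrow> real" where
  "sint a b f = (if a \<le> b then integral {a..b} f else - integral {b..a} f)"

definition xmap :: "(real \<Rightarrow> real) \<Rightarrow> real \<Rightarrow> real" where
  "xmap q t = sint 0 t (\<lambda>u. sqrt (q u))"

definition schwarzian :: "(real \<Rightarrow> real) \<Rightarrow> real \<Rightarrow> real" where
  "schwarzian f s = deriv (deriv (deriv f)) s / deriv f s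
                    - 3/2 * (deriv (deriv f) s / deriv f s)^2"

definition pfun :: "(real \<Rightarrow> real) \<Rightarrow> real \<Rightarrow> real" where
  "pfun q x = 2 * schwarzian (inv (xmap q)) x"

definition Top :: "real \<Rightarrow> (real \<Rightarrow> real) \<Rightarrow> real \<Rightarrow> real" where
  "Top lam \<sigma> x = (\<integral>y. sin (2 * lam * \<bar>x - y\<bar>) * \<sigma> y \<partial>lborel) / (4 * lam)"

definition Sop :: "real \<Rightarrow> (real \<Rightarrow> real) \<Rightarrow> real \<Rightarrow> real" where
  "Sop lam f x = 1/4 * (deriv f x)^2 - 4 * lam^2 * (exp (f x) - 1 - f x)"

definition is_ode_sol :: "real \<Rightarrow> (real \<Rightarrow> real) \<Rightarrow> (real \<Rightarrow> real) \<Rightarrow> bool" where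
  "is_ode_sol lam q y \<longleftrightarrow> (\<exists>y' y''. \<forall>t\<in>{0..1}.
      (y has_real_derivative y' t) (at t within {0..1}) \<and>
      (y' has_real_derivative y'' t) (at t within {0..1}) \<and>
      y'' t + lam^2 * q t * y t = 0)"

definition is_sol_basis :: "real \<Rightarrow> (real \<Rightarrow> real) \<Rightarrow> (real \<Rightarrow> real) \<Rightarrow> (real \<Rightarrow> real) \<Rightarrow> bool" where
  "is_sol_basis lam q u v \<longleftrightarrow>
     is_ode_sol lam q u \<and> is_ode_sol lam q v \<and>
     (\<forall>a b. (\<forall>t\<in>{0..1}. a * u t + b * v t = 0) \<longrightarrow> a = 0 \<and> b = 0) \<and>
     (\<forall>y. is_ode_sol lam q y \<longrightarrow> (\<exists>a b. \<forall>t\<in>{0..1}. y t = a * u t + b * v t))"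

definition is_phase_function :: "real \<Rightarrow> (real \<Rightarrow> real) \<Rightarrow> (real \<Rightarrow> real) \<Rightarrow> bool" where
  "is_phase_function lam q \<alpha> \<longleftrightarrow>
     is_sol_basis lam q (\<lambda>t. cos (\<alpha> t) / sqrt \<bar>deriv \<alpha> t\<bar>) (\<lambda>t. sin (\<alpha> t) / sqrt \<bar>deriv \<alpha> t\<bar>)"

end

theory Submission
  imports Defs
begin


lemma integ_ind:
  fixes f :: "real \<Rightarrow> real"
  shows "A \<in> sets borel \<Longrightarrow> integrable lborel f \<Longrightarrow> integrable lborel (\<lambda>y. indicator A y * f y)"
  using integrable_mult_indicator[of A lborel f] by simp

lemma cumul_deriv:
  fixes f :: "real \<Rightarrow> real"
  assumes fi: "integrable lborel f" and fc: "continuous_on UNIV f"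
  shows "((\<lambda>x. \<integral>y. indicator {..x} y * f y \<partial>lborel) has_real_derivative f x0) (at x0)"
proof -
  define a where "a = x0 - 1"
  define b where "b = x0 + 1"
  have eq: "(\<integral>y. indicator {..x} y * f y \<partial>lborel) =
      (\<integral>y. indicator {..<a} y * f y \<partial>lborel) + integral {a..x} f" if "x \<in> {a<..}" for x
  proof -
    have si: "set_integrable lborel {a..x} f"
      by (rule borel_integrable_atLeastAtMost') (use fc continuous_on_subset in blast)
    have "(\<integral>y. indicator {..x} y * f y \<partial>lborel) =
        (\<integral>y. indicator {..<a} y * f y + indicator {a..x} y * f y \<partial>lborel)"
      using that by (intro Bochner_Integration.integral_cong) (auto split: split_indicator)
    also have "\<dots> = (\<integral>y. indicator {..<a} y * f y \<partial>lborel) + (\<integral>y. indicator {a..x} y * f y \<partial>lborel)"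
      using si fi unfolding set_integrable_def
      by (intro Bochner_Integration.integral_add integ_ind) auto
    also have "(\<integral>y. indicator {a..x} y * f y \<partial>lborel) = integral {a..x} f"
      using set_borel_integral_eq_integral(2)[OF si] by (simp add: set_lebesgue_integral_def)
    finally show ?thesis .
  qed
  have "((\<lambda>x. integral {a..x} f) has_real_derivative f x0) (at x0 within {a..b})"
    by (rule integral_has_real_derivative) (auto simp: a_def b_def intro: continuous_on_subset[OF fc])
  then have "((\<lambda>x. integral {a..x} f) has_real_derivative f x0) (at x0)"
    by (simp add: at_within_Icc_at a_def b_def)
  then have "((\<lambda>x. (\<integral>y. indicator {..<a} y * f y \<partial>lborel) + integral {a..x} f) has_real_derivative f x0) (at x0)"
    by (auto intro!: derivative_eq_intros)
  then show ?thesis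
    by (rule has_field_derivative_transform_within_open[where S="{a<..}"]) (auto simp: a_def eq)
qed

lemma integ_bdd:
  fixes f g :: "real \<Rightarrow> real"
  assumes "integrable lborel f" "continuous_on UNIV g" "\<And>y. \<bar>g y\<bar> \<le> 1"
  shows "integrable lborel (\<lambda>y. g y * f y)"
proof (rule Bochner_Integration.integrable_bound[OF assms(1)])
  have "g \<in> borel_measurable lborel" using assms(2) by (simp add: borel_measurable_continuous_onI)
  moreover have "f \<in> borel_measurable lborel" using assms(1) by simp
  ultimately show "(\<lambda>y. g y * f y) \<in> borel_measurable lborel" by measurable
  show "AE x in lborel. norm (g x * f x) \<le> norm (f x)"
    using assms(3) by (auto simp: abs_mult intro!: mult_left_le_one_le)
qed

lemma Top_repr:
  fixes lam :: real and \<sigma> :: "real \<Rightarrow> real"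
  assumes lam: "lam > 0" and si: "integrable lborel \<sigma>"
  defines "c \<equiv> \<lambda>y. cos (2*lam*y) * \<sigma> y" and "s \<equiv> \<lambda>y. sin (2*lam*y) * \<sigma> y"
  shows "Top lam \<sigma> x = (sin (2*lam*x) * (2 * (\<integral>y. indicator {..x} y * c y \<partial>lborel) - (\<integral>y. c y \<partial>lborel))
       - cos (2*lam*x) * (2 * (\<integral>y. indicator {..x} y * s y \<partial>lborel) - (\<integral>y. s y \<partial>lborel))) / (4*lam)"
proof -
  have ic: "integrable lborel c" unfolding c_def by (rule integ_bdd[OF si]) (auto intro!: continuous_intros)
  have iss: "integrable lborel s" unfolding s_def by (rule integ_bdd[OF si]) (auto intro!: continuous_intros)
  have ic2: "integrable lborel (\<lambda>y. indicator {..x} y * c y)" by (rule integ_ind[OF _ ic]) simp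
  have is2: "integrable lborel (\<lambda>y. indicator {..x} y * s y)" by (rule integ_ind[OF _ iss]) simp
  have pw: "sin (2 * lam * \<bar>x - y\<bar>) * \<sigma> y =
     2 * (sin (2*lam*x) * (indicator {..x} y * c y)) - 2 * (cos (2*lam*x) * (indicator {..x} y * s y))
     - (sin (2*lam*x) * c y) + cos (2*lam*x) * s y" for y
  proof (cases "y \<le> x")
    case True
    then have "sin (2 * lam * \<bar>x - y\<bar>) = sin (2*lam*x - 2*lam*y)" by (simp add: right_diff_distrib)
    then show ?thesis using True by (simp add: sin_diff c_def s_def algebra_simps)
  next
    case False
    then have "sin (2 * lam * \<bar>x - y\<bar>) = - sin (2*lam*x - 2*lam*y)"
      by (simp add: right_diff_distrib abs_if) (metis minus_diff_eq sin_minus)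
    then show ?thesis using False by (simp add: sin_diff c_def s_def algebra_simps)
  qed
  have "(\<integral>y. sin (2 * lam * \<bar>x - y\<bar>) * \<sigma> y \<partial>lborel) =
     (\<integral>y. 2 * (sin (2*lam*x) * (indicator {..x} y * c y)) - 2 * (cos (2*lam*x) * (indicator {..x} y * s y))
     - (sin (2*lam*x) * c y) + cos (2*lam*x) * s y \<partial>lborel)"
    by (simp only: pw)
  also have "\<dots> = 2 * (sin (2*lam*x) * (\<integral>y. indicator {..x} y * c y \<partial>lborel)) - 2 * (cos (2*lam*x) * (\<integral>y. indicator {..x} y * s y \<partial>lborel))
     - (sin (2*lam*x) * (\<integral>y. c y \<partial>lborel)) + cos (2*lam*x) * (\<integral>y. s y \<partial>lborel)"
    using ic iss ic2 is2 by simp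
  finally show ?thesis unfolding Top_def by (simp add: algebra_simps)
qed

lemma sc_aux: "(a::real) * (b * (16 * (cos t * cos t))) + a * (b * (16 * (sin t * sin t))) = a * (b * 16)"
proof -
  have "sin t * sin t = 1 - cos t * cos t" using sin_cos_squared_add3[of t] by linarith
  note ss = this
  show ?thesis by (subst ss) (simp add: algebra_simps)
qed

lemma delta_props:
  fixes lam :: real and \<sigma> :: "real \<Rightarrow> real"
  assumes lam: "lam > 0" and si: "integrable lborel \<sigma>" and sc: "continuous_on UNIV \<sigma>"
  shows "\<exists>d1. (\<forall>x. (Top lam \<sigma> has_real_derivative d1 x) (at x)) \<and>
              (\<forall>x. (d1 has_real_derivative (\<sigma> x - 4*lam^2 * Top lam \<sigma> x)) (at x))"
proof -
  define c where "c = (\<lambda>y. cos (2*lam*y) * \<sigma> y)"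
  define s where "s = (\<lambda>y. sin (2*lam*y) * \<sigma> y)"
  define A where "A = (\<lambda>x. \<integral>y. indicator {..x} y * c y \<partial>lborel)"
  define B where "B = (\<lambda>x. \<integral>y. indicator {..x} y * s y \<partial>lborel)"
  define Ct where "Ct = (\<integral>y. c y \<partial>lborel)"
  define St where "St = (\<integral>y. s y \<partial>lborel)"
  have ic: "integrable lborel c" unfolding c_def by (rule integ_bdd[OF si]) (auto intro!: continuous_intros)
  have iss: "integrable lborel s" unfolding s_def by (rule integ_bdd[OF si]) (auto intro!: continuous_intros)
  have cc: "continuous_on UNIV c" unfolding c_def by (auto intro!: continuous_intros sc)
  have sc': "continuous_on UNIV s" unfolding s_def by (auto intro!: continuous_intros sc)
  have TR: "Top lam \<sigma> = (\<lambda>x. (sin (2*lam*x) * (2 * A x - Ct) - cos (2*lam*x) * (2 * B x - St)) / (4*lam))"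
    using Top_repr[OF lam si] unfolding A_def B_def Ct_def St_def c_def s_def by blast
  have dA: "(A has_real_derivative c x) (at x)" for x unfolding A_def by (rule cumul_deriv[OF ic cc])
  have dB: "(B has_real_derivative s x) (at x)" for x unfolding B_def by (rule cumul_deriv[OF iss sc'])
  define d1 where "d1 = (\<lambda>x. (cos (2*lam*x) * (2 * A x - Ct) + sin (2*lam*x) * (2 * B x - St)) / 2)"
  have D1: "(Top lam \<sigma> has_real_derivative d1 x) (at x)" for x
    unfolding TR
    apply (rule derivative_eq_intros refl dA dB | simp)+
    using lam by (auto simp: d1_def c_def s_def field_simps)
  have D2: "(d1 has_real_derivative (\<sigma> x - 4*lam^2 * Top lam \<sigma> x)) (at x)" for x
    unfolding d1_def
    apply (rule derivative_eq_intros refl dA dB | simp)+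
    using lam by (auto simp: TR c_def s_def field_simps power2_eq_square sc_aux)
  show ?thesis using D1 D2 by blast
qed

lemma Ck_D: "Ck k f \<Longrightarrow> j < k \<Longrightarrow> ((deriv^^j) f has_real_derivative (deriv^^(Suc j)) f x) (at x)"
  by (simp add: Ck_def DERIV_deriv_iff_real_differentiable)

lemma Ck_cont: "Ck k f \<Longrightarrow> j \<le> k \<Longrightarrow> continuous_on UNIV ((deriv^^j) f)"
  unfolding Ck_def
  by (metis continuous_at_imp_continuous_on differentiable_imp_continuous_within le_neq_implies_less)

lemma Ck2I:
  assumes d1: "\<And>x. (f has_real_derivative f1 x) (at x)" and d2: "\<And>x. (f1 has_real_derivative f2 x) (at x)"
    and c: "continuous_on UNIV f2"
  shows "Ck 2 f" "deriv f = f1" "deriv (deriv f) = f2"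
proof -
  show e1: "deriv f = f1" using d1 by (auto intro!: ext DERIV_imp_deriv)
  show e2: "deriv (deriv f) = f2" using d2 by (auto simp: e1 intro!: ext DERIV_imp_deriv)
  have e2': "deriv f1 = f2" using e1 e2 by simp
  show "Ck 2 f" unfolding Ck_def
  proof (intro conjI allI impI)
    fix j x assume "j < (2::nat)" then have "j = 0 \<or> j = 1" by auto
    moreover have "f differentiable at x" "f1 differentiable at x"
      using d1 d2 real_differentiable_def by blast+
    ultimately show "(deriv^^j) f differentiable at x" by (auto simp: e1)
  next
    show "continuous_on UNIV ((deriv^^2) f)" using c by (simp add: numeral_2_eq_2 e1 e2')
  qed
qed

lemma Ck3I:
  assumes d1: "\<And>x. (f has_real_derivative f1 x) (at x)" and d2: "\<And>x. (f1 has_real_derivative f2 x) (at x)"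
    and d3: "\<And>x. (f2 has_real_derivative f3 x) (at x)"
    and c: "continuous_on UNIV f3"
  shows "Ck 3 f" "deriv f = f1" "deriv (deriv f) = f2" "deriv (deriv (deriv f)) = f3"
proof -
  show e1: "deriv f = f1" using d1 by (auto intro!: ext DERIV_imp_deriv)
  show e2: "deriv (deriv f) = f2" using d2 by (auto simp: e1 intro!: ext DERIV_imp_deriv)
  show e3: "deriv (deriv (deriv f)) = f3" using d3 by (auto simp: e2 intro!: ext DERIV_imp_deriv)
  have e2': "deriv f1 = f2" using e1 e2 by simp
  have e3': "deriv f2 = f3" using e2' e3 e1 by simp
  show "Ck 3 f" unfolding Ck_def
  proof (intro conjI allI impI)
    fix j x assume "j < (3::nat)" then have "j = 0 \<or> j = 1 \<or> j = 2" by auto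
    moreover have "f differentiable at x" "f1 differentiable at x" "f2 differentiable at x"
      using d1 d2 d3 real_differentiable_def by blast+
    ultimately show "(deriv^^j) f differentiable at x" by (auto simp: e1 e2' numeral_2_eq_2)
  next
    show "continuous_on UNIV ((deriv^^3) f)" using c by (simp add: numeral_3_eq_3 e1 e2' e3')
  qed
qed

lemma sint_deriv:
  fixes f :: "real \<Rightarrow> real"
  assumes fc: "continuous_on UNIV f"
  shows "((\<lambda>t. sint 0 t f) has_real_derivative f t0) (at t0)"
proof -
  define a where "a = min 0 t0 - 1"
  define b where "b = max 0 t0 + 1"
  have ii: "f integrable_on {u..v}" for u v by (rule integrable_continuous_real) (rule continuous_on_subset[OF fc], simp)
  have eq: "sint 0 t f = integral {a..t} f - integral {a..0} f" if "t \<in> {a<..}" for t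
  proof (cases "0 \<le> t")
    case True
    have "integral {a..0} f + integral {0..t} f = integral {a..t} f"
      by (rule Henstock_Kurzweil_Integration.integral_combine) (use True that in \<open>auto simp: a_def intro: ii\<close>)
    then show ?thesis using True by (simp add: sint_def)
  next
    case False
    have "integral {a..t} f + integral {t..0} f = integral {a..0} f"
      by (rule Henstock_Kurzweil_Integration.integral_combine) (use False that in \<open>auto simp: a_def intro: ii\<close>)
    then show ?thesis using False by (simp add: sint_def)
  qed
  have "((\<lambda>t. integral {a..t} f) has_real_derivative f t0) (at t0 within {a..b})"
    by (rule integral_has_real_derivative) (auto simp: a_def b_def intro: continuous_on_subset[OF fc])
  then have "((\<lambda>t. integral {a..t} f) has_real_derivative f t0) (at t0)"
    by (simp add: at_within_Icc_at a_def b_def)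
  then have "((\<lambda>t. integral {a..t} f - integral {a..0} f) has_real_derivative f t0) (at t0)"
    by (auto intro!: derivative_eq_intros)
  then show ?thesis
    by (rule has_field_derivative_transform_within_open[where S="{a<..}"]) (auto simp: a_def eq)
qed



locale qsetup =
  fixes q :: "real \<Rightarrow> real"
  assumes q_smooth: "smooth_fun q" and q_pos: "\<And>t. q t > 0" and x_onto: "surj (xmap q)"
begin

definition "r = (\<lambda>t. sqrt (q t))"
definition "tinv = inv (xmap q)"

lemma Ck3q: "Ck 3 q" using q_smooth unfolding smooth_fun_def by blast

lemma dq: "(q has_real_derivative deriv q x) (at x)"
  using Ck_D[OF Ck3q, of 0] by simp
lemma dq1: "(deriv q has_real_derivative deriv (deriv q) x) (at x)"
  using Ck_D[OF Ck3q, of 1] by simp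
lemma dq2: "(deriv (deriv q) has_real_derivative deriv (deriv (deriv q)) x) (at x)"
  using Ck_D[OF Ck3q, of 2] by (simp add: numeral_2_eq_2)

lemma cq: "continuous_on UNIV q"
  using dq by (meson DERIV_isCont continuous_at_imp_continuous_on)
lemma cq1: "continuous_on UNIV (deriv q)"
  using dq1 by (meson DERIV_isCont continuous_at_imp_continuous_on)
lemma cq2: "continuous_on UNIV (deriv (deriv q))"
  using dq2 by (meson DERIV_isCont continuous_at_imp_continuous_on)

lemma r_pos: "r t > 0" using q_pos by (simp add: r_def)
lemma r_sq: "r t ^ 2 = q t" using q_pos[of t] by (simp add: r_def less_imp_le)
lemma r_sq': "r t * r t = q t" using r_sq[of t] by (simp add: power2_eq_square)

lemma dr: "(r has_real_derivative deriv q t / (2 * r t)) (at t)"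
proof -
  have "((\<lambda>t. sqrt (q t)) has_real_derivative inverse (sqrt (q t)) / 2 * deriv q t) (at t)"
    by (rule DERIV_chain2[OF DERIV_real_sqrt[OF q_pos] dq])
  then show ?thesis by (simp add: r_def field_simps)
qed

lemma cr: "continuous_on UNIV r"
  using dr by (meson DERIV_isCont continuous_at_imp_continuous_on)

lemma dx: "(xmap q has_real_derivative r t) (at t)"
  unfolding xmap_def r_def
  by (rule sint_deriv) (auto intro!: continuous_intros cq)

lemma x_mono: "a < b \<Longrightarrow> xmap q a < xmap q b"
  using dx r_pos by (intro DERIV_pos_imp_increasing[of a b "xmap q"]) blast+

lemma x_inj: "inj (xmap q)"
proof -
  have "strict_mono (xmap q)" by (rule strict_monoI) (rule x_mono)
  then show ?thesis by (rule strict_mono_imp_inj_on)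
qed

lemma tinv_x: "tinv (xmap q t) = t"
  unfolding tinv_def using x_inj by simp
lemma x_tinv: "xmap q (tinv x) = x"
  unfolding tinv_def using x_onto by (simp add: surj_f_inv_f)

lemma dtinv: "(tinv has_real_derivative 1 / r (tinv x)) (at x)"
proof -
  have cont: "isCont tinv x"
  proof -
    have "isCont tinv (xmap q (tinv x))"
      by (rule isCont_inverse_function[where d=1]) (auto simp: tinv_x intro: DERIV_isCont[OF dx])
    then show ?thesis by (simp add: x_tinv)
  qed
  have "(tinv has_real_derivative inverse (r (tinv x))) (at x)"
    by (rule DERIV_inverse_function[where a="x-1" and b="x+1" and f="xmap q"])
       (use dx r_pos[of "tinv x"] cont x_tinv in \<open>auto\<close>)
  then show ?thesis by (simp add: divide_inverse)
qed

lemma dcomp: "(F has_real_derivative D) (at (tinv x)) \<Longrightarrow>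
   ((\<lambda>x. F (tinv x)) has_real_derivative D / r (tinv x)) (at x)"
  using DERIV_chain2[of F D tinv x "1 / r (tinv x)"] dtinv by simp

definition "g1 = (\<lambda>t. 1 / r t)"
definition "g2 = (\<lambda>t. - deriv q t / (2 * r t ^ 4))"
definition "g3 = (\<lambda>t. (- deriv (deriv q) t / (2 * r t ^ 4) + deriv q t ^ 2 / r t ^ 6) / r t)"

lemma dg1: "(g1 has_real_derivative g2 t * r t) (at t)"
  unfolding g1_def g2_def
  apply (rule derivative_eq_intros dr refl | simp)+
  using r_pos[of t] by (auto simp: field_simps eval_nat_numeral)

lemma dg2: "(g2 has_real_derivative g3 t * r t) (at t)"
  unfolding g2_def g3_def
  apply (rule derivative_eq_intros dr dq1 refl | simp)+
  using r_pos[of t] by (auto simp: field_simps eval_nat_numeral)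

lemma deriv_tinv: "deriv tinv = (\<lambda>x. g1 (tinv x))"
  using dtinv by (auto intro!: ext DERIV_imp_deriv simp: g1_def)
lemma deriv_tinv2: "deriv (\<lambda>x. g1 (tinv x)) = (\<lambda>x. g2 (tinv x))"
proof (rule ext)
  fix x show "deriv (\<lambda>x. g1 (tinv x)) x = g2 (tinv x)"
    using dcomp[OF dg1[of "tinv x"]] r_pos[of "tinv x"] by (intro DERIV_imp_deriv) simp
qed
lemma deriv_tinv3: "deriv (\<lambda>x. g2 (tinv x)) = (\<lambda>x. g3 (tinv x))"
proof (rule ext)
  fix x show "deriv (\<lambda>x. g2 (tinv x)) x = g3 (tinv x)"
    using dcomp[OF dg2[of "tinv x"]] r_pos[of "tinv x"] by (intro DERIV_imp_deriv) simp
qed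

lemma pfun_x: "pfun q (xmap q t) = (1 / q t) * (5/4 * (deriv q t / q t)^2 - deriv (deriv q) t / q t)"
proof -
  have "pfun q (xmap q t) = 2 * (g3 t / g1 t - 3/2 * (g2 t / g1 t)^2)"
    unfolding pfun_def schwarzian_def tinv_def[symmetric] deriv_tinv deriv_tinv2 deriv_tinv3 tinv_x ..
  also have "\<dots> = (1 / q t) * (5/4 * (deriv q t / q t)^2 - deriv (deriv q) t / q t)"
    using r_pos[of t] unfolding g1_def g2_def g3_def
    by (simp add: r_sq[symmetric] field_simps)
  finally show ?thesis .
qed

lemma cx: "continuous_on UNIV (xmap q)"
  using dx by (meson DERIV_isCont continuous_at_imp_continuous_on)

lemma cont_comp: "continuous_on UNIV f \<Longrightarrow> continuous_on UNIV (\<lambda>t. f (xmap q t))"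
  by (rule continuous_on_compose2[OF _ cx]) auto

lemma part2:
  fixes \<delta> d1 d2 :: "real \<Rightarrow> real"
  assumes dd1: "\<And>x. (\<delta> has_real_derivative d1 x) (at x)"
    and dd2: "\<And>x. (d1 has_real_derivative d2 x) (at x)"
    and cd2: "continuous_on UNIV d2"
    and eq1: "\<And>x. d2 x - 1/4 * (d1 x)^2 + 4 * lam^2 * (exp (\<delta> x) - 1) = pfun q x"
  defines "D1 \<equiv> \<lambda>t. d1 (xmap q t) * r t"
    and "D2 \<equiv> \<lambda>t. d2 (xmap q t) * q t + d1 (xmap q t) * (deriv q t / (2 * r t))"
  shows "\<And>t. ((\<lambda>t. \<delta> (xmap q t)) has_real_derivative D1 t) (at t)"
    "\<And>t. (D1 has_real_derivative D2 t) (at t)"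
    "continuous_on UNIV D2"
    "\<And>t. D2 t - deriv q t / (2 * q t) * D1 t - 1/4 * (D1 t)^2 + 4 * lam^2 * q t * (exp (\<delta> (xmap q t)) - 1)
         = q t * ((1 / q t) * (5/4 * (deriv q t / q t)^2 - deriv (deriv q) t / q t))"
proof -
  show "((\<lambda>t. \<delta> (xmap q t)) has_real_derivative D1 t) (at t)" for t
    unfolding D1_def by (rule DERIV_chain2[OF dd1 dx])
  show "(D1 has_real_derivative D2 t) (at t)" for t
    unfolding D1_def D2_def
    by (rule derivative_eq_intros DERIV_chain2[OF dd2 dx] dr refl | simp)+
       (simp add: r_sq' algebra_simps)
  have cd1: "continuous_on UNIV d1" using dd2 by (meson DERIV_isCont continuous_at_imp_continuous_on)
  show "continuous_on UNIV D2" unfolding D2_def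
    using r_pos by (auto intro!: continuous_intros cont_comp cd1 cd2 cq cq1 cr simp: less_imp_neq[symmetric])
  show "D2 t - deriv q t / (2 * q t) * D1 t - 1/4 * (D1 t)^2 + 4 * lam^2 * q t * (exp (\<delta> (xmap q t)) - 1)
         = q t * ((1 / q t) * (5/4 * (deriv q t / q t)^2 - deriv (deriv q) t / q t))" for t
  proof -
    have "D2 t - deriv q t / (2 * q t) * D1 t - 1/4 * (D1 t)^2 + 4 * lam^2 * q t * (exp (\<delta> (xmap q t)) - 1)
        = q t * (d2 (xmap q t) - 1/4 * (d1 (xmap q t))^2 + 4 * lam^2 * (exp (\<delta> (xmap q t)) - 1))"
      unfolding D1_def D2_def using r_pos[of t] q_pos[of t]
      by (simp add: field_simps power2_eq_square r_sq'[symmetric])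
    also have "\<dots> = q t * pfun q (xmap q t)" by (simp only: eq1)
    finally show ?thesis by (simp only: pfun_x)
  qed
qed

lemma part3:
  fixes \<delta> D1 D2 :: "real \<Rightarrow> real" and lam :: real
  assumes lam: "lam > 0"
    and dt1: "\<And>t. ((\<lambda>t. \<delta> (xmap q t)) has_real_derivative D1 t) (at t)"
    and dt2: "\<And>t. (D1 has_real_derivative D2 t) (at t)"
    and cD2: "continuous_on UNIV D2"
    and eq2: "\<And>t. D2 t - deriv q t / (2 * q t) * D1 t - 1/4 * (D1 t)^2 + 4 * lam^2 * q t * (exp (\<delta> (xmap q t)) - 1)
         = q t * ((1 / q t) * (5/4 * (deriv q t / q t)^2 - deriv (deriv q) t / q t))"
  defines "\<alpha> \<equiv> \<lambda>t. lam * sint 0 t (\<lambda>u. sqrt (q u) * exp (\<delta> (xmap q u) / 2))"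
    and "E \<equiv> \<lambda>t. exp (\<delta> (xmap q t) / 2)"
    and "R1 \<equiv> \<lambda>t. deriv q t / (2 * r t)"
    and "R2 \<equiv> \<lambda>t. deriv (deriv q) t / (2 * r t) - (deriv q t)^2 / (4 * r t ^ 3)"
  defines "w \<equiv> \<lambda>t. lam * (r t * E t)"
    and "W1 \<equiv> \<lambda>t. lam * (R1 t * E t + r t * (E t * (D1 t / 2)))"
    and "W2 \<equiv> \<lambda>t. lam * (R2 t * E t + R1 t * (E t * (D1 t / 2))
                     + (R1 t * (E t * (D1 t / 2)) + r t * ((E t * (D1 t / 2)) * (D1 t / 2) + E t * (D2 t / 2))))"
  shows "\<And>t. (\<alpha> has_real_derivative w t) (at t)"
    "\<And>t. (w has_real_derivative W1 t) (at t)"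
    "\<And>t. (W1 has_real_derivative W2 t) (at t)"
    "continuous_on UNIV W2"
    "\<And>t. w t > 0"
    "\<And>t. (w t)^2 = lam^2 * q t - 1/2 * (W2 t / w t) + 3/4 * (W1 t / w t)^2"
    "\<alpha> 0 = 0"
proof -
  have cdt: "continuous_on UNIV (\<lambda>t. \<delta> (xmap q t))"
    using dt1 by (meson DERIV_isCont continuous_at_imp_continuous_on)
  have cD1: "continuous_on UNIV D1"
    using dt2 by (meson DERIV_isCont continuous_at_imp_continuous_on)
  have "((\<lambda>t. sint 0 t (\<lambda>u. sqrt (q u) * exp (\<delta> (xmap q u) / 2))) has_real_derivative
          sqrt (q t) * exp (\<delta> (xmap q t) / 2)) (at t)" for t
    by (rule sint_deriv) (auto intro!: continuous_intros cq cdt)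
  then show "(\<alpha> has_real_derivative w t) (at t)" for t
    unfolding \<alpha>_def w_def r_def E_def by (auto intro!: derivative_eq_intros)
  have dR1: "(R1 has_real_derivative R2 t) (at t)" for t
    unfolding R1_def R2_def
    apply (rule derivative_eq_intros dq1 dr refl | simp)+
    using r_pos[of t] by (auto simp: field_simps eval_nat_numeral)
  have dE: "(E has_real_derivative E t * (D1 t / 2)) (at t)" for t
    unfolding E_def by (rule derivative_eq_intros dt1 refl | simp)+
  have dr': "(r has_real_derivative R1 t) (at t)" for t unfolding R1_def by (rule dr)
  have dED: "((\<lambda>t. E t * (D1 t / 2)) has_real_derivative (E t * (D1 t / 2)) * (D1 t / 2) + E t * (D2 t / 2)) (at t)" for t
    using DERIV_mult[OF dE DERIV_cdivide[OF dt2, of 2]] by (simp add: algebra_simps)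
  show "(w has_real_derivative W1 t) (at t)" for t
    unfolding w_def W1_def
    using DERIV_cmult[OF DERIV_mult[OF dr' dE], of lam] by (simp add: algebra_simps)
  show "(W1 has_real_derivative W2 t) (at t)" for t
    unfolding W1_def W2_def
    using DERIV_cmult[OF DERIV_add[OF DERIV_mult[OF dR1 dE] DERIV_mult[OF dr' dED]], of lam]
    by (simp add: algebra_simps)
  have cE: "continuous_on UNIV E" unfolding E_def by (auto intro!: continuous_intros cdt)
  show "continuous_on UNIV W2" unfolding W2_def R1_def R2_def
    using r_pos by (auto intro!: continuous_intros cD1 cD2 cE cq cq1 cq2 cr simp: less_imp_neq[symmetric])
  show "w t > 0" for t unfolding w_def E_def using lam r_pos[of t] by simp
  show "(w t)^2 = lam^2 * q t - 1/2 * (W2 t / w t) + 3/4 * (W1 t / w t)^2" for t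
  proof -
    define e where "e = E t"
    have e_pos: "e > 0" unfolding e_def E_def by simp
    have ee: "exp (\<delta> (xmap q t)) = e * e" unfolding e_def E_def by (simp flip: exp_add)
    have D2e: "D2 t = q t * ((1 / q t) * (5/4 * (deriv q t / q t)^2 - deriv (deriv q) t / q t))
        + deriv q t / (2 * q t) * D1 t + 1/4 * (D1 t)^2 - 4 * lam^2 * q t * (exp (\<delta> (xmap q t)) - 1)"
      using eq2[of t] by simp
    show ?thesis
      unfolding w_def W1_def W2_def e_def[symmetric] D2e ee R1_def R2_def
      using r_pos[of t] e_pos lam
      by (simp add: r_sq[symmetric] field_simps) algebra
  qed
  show "\<alpha> 0 = 0" unfolding \<alpha>_def sint_def by simp
qed

end



lemma phase:
  fixes \<alpha> w W1 W2 q :: "real \<Rightarrow> real" and lam :: real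
  assumes d\<alpha>: "\<And>t. (\<alpha> has_real_derivative w t) (at t)"
    and dw: "\<And>t. (w has_real_derivative W1 t) (at t)"
    and dW1: "\<And>t. (W1 has_real_derivative W2 t) (at t)"
    and wpos: "\<And>t. w t > 0"
    and K: "\<And>t. (w t)^2 = lam^2 * q t - 1/2 * (W2 t / w t) + 3/4 * (W1 t / w t)^2"
    and a0: "\<alpha> 0 = 0"
  shows "is_phase_function lam q \<alpha>"
proof -
  have dal: "deriv \<alpha> = w" using d\<alpha> by (auto intro!: ext DERIV_imp_deriv)
  define R where "R = (\<lambda>t. sqrt (w t))"
  have R_pos: "R t > 0" for t using wpos[of t] by (simp add: R_def)
  have R_sq: "w t = R t ^ 2" for t using wpos[of t] by (simp add: R_def less_imp_le)
  have dR: "(R has_real_derivative W1 t / (2 * R t)) (at t)" for t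
  proof -
    have "((\<lambda>t. sqrt (w t)) has_real_derivative inverse (sqrt (w t)) / 2 * W1 t) (at t)"
      by (rule DERIV_chain2[OF DERIV_real_sqrt[OF wpos] dw])
    then show ?thesis by (simp add: R_def field_simps)
  qed
  have W2e: "W2 t = 2 * w t * (lam^2 * q t - (w t)^2 + 3/4 * (W1 t / w t)^2)" for t
    using K[of t] wpos[of t] by (simp add: field_simps)
  define u where "u = (\<lambda>t. cos (\<alpha> t) / R t)"
  define v where "v = (\<lambda>t. sin (\<alpha> t) / R t)"
  define P where "P = (\<lambda>t. w t / R t)"
  define Q where "Q = (\<lambda>t. W1 t / (2 * R t ^ 3))"
  define P' where "P' = (\<lambda>t. (W1 t * R t - w t * (W1 t / (2 * R t))) / (R t * R t))"
  define Q' where "Q' = (\<lambda>t. (W2 t * (2 * R t ^ 3) - W1 t * (6 * R t ^ 2 * (W1 t / (2 * R t)))) / (2 * R t ^ 3 * (2 * R t ^ 3)))"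
  have dP: "(P has_real_derivative P' t) (at t)" for t
    unfolding P_def P'_def using DERIV_divide[OF dw dR R_pos[THEN less_imp_neq, symmetric, of t]] by simp
  have dR3: "((\<lambda>t. 2 * R t ^ 3) has_real_derivative 2 * (3 * R t ^ 2 * (W1 t / (2 * R t)))) (at t)" for t
    using DERIV_cmult[OF DERIV_power[OF dR, of 3], of 2] by (simp add: algebra_simps)
  have dQ: "(Q has_real_derivative Q' t) (at t)" for t
    unfolding Q_def Q'_def using DERIV_divide[OF dW1 dR3, of t] R_pos[of t] by (simp add: algebra_simps)
  define u1 where "u1 = (\<lambda>t. - (sin (\<alpha> t) * P t) - cos (\<alpha> t) * Q t)"
  define v1 where "v1 = (\<lambda>t. cos (\<alpha> t) * P t - sin (\<alpha> t) * Q t)"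
  have dsa: "((\<lambda>t. sin (\<alpha> t)) has_real_derivative cos (\<alpha> t) * w t) (at t)" for t
    using DERIV_chain2[OF DERIV_sin d\<alpha>] by simp
  have dca: "((\<lambda>t. cos (\<alpha> t)) has_real_derivative - sin (\<alpha> t) * w t) (at t)" for t
    using DERIV_chain2[OF DERIV_cos d\<alpha>] by simp
  have du: "(u has_real_derivative u1 t) (at t)" for t
  proof -
    have "(u has_real_derivative (- sin (\<alpha> t) * w t * R t - cos (\<alpha> t) * (W1 t / (2 * R t))) / (R t * R t)) (at t)"
      unfolding u_def using DERIV_divide[OF dca dR R_pos[THEN less_imp_neq, symmetric, of t]] by simp
    moreover have "(- sin (\<alpha> t) * w t * R t - cos (\<alpha> t) * (W1 t / (2 * R t))) / (R t * R t) = u1 t"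
      unfolding u1_def P_def Q_def R_sq using R_pos[of t] by (simp add: field_simps eval_nat_numeral)
    ultimately show ?thesis by simp
  qed
  have dv: "(v has_real_derivative v1 t) (at t)" for t
  proof -
    have "(v has_real_derivative (cos (\<alpha> t) * w t * R t - sin (\<alpha> t) * (W1 t / (2 * R t))) / (R t * R t)) (at t)"
      unfolding v_def using DERIV_divide[OF dsa dR R_pos[THEN less_imp_neq, symmetric, of t]] by simp
    moreover have "(cos (\<alpha> t) * w t * R t - sin (\<alpha> t) * (W1 t / (2 * R t))) / (R t * R t) = v1 t"
      unfolding v1_def P_def Q_def R_sq using R_pos[of t] by (simp add: field_simps eval_nat_numeral)
    ultimately show ?thesis by simp
  qed
  have du1: "(u1 has_real_derivative (- (lam^2 * q t * u t))) (at t)" for t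
  proof -
    have "(u1 has_real_derivative - (cos (\<alpha> t) * w t * P t + sin (\<alpha> t) * P' t) - (- sin (\<alpha> t) * w t * Q t + cos (\<alpha> t) * Q' t)) (at t)"
      unfolding u1_def by (rule derivative_eq_intros DERIV_mult[OF dsa dP] DERIV_mult[OF dca dQ] refl)+ simp
    moreover have "- (cos (\<alpha> t) * w t * P t + sin (\<alpha> t) * P' t) - (- sin (\<alpha> t) * w t * Q t + cos (\<alpha> t) * Q' t) = - (lam^2 * q t * u t)"
      unfolding u_def P_def Q_def P'_def Q'_def W2e R_sq using R_pos[of t] by (simp add: field_simps eval_nat_numeral)
    ultimately show ?thesis by simp
  qed
  have dv1: "(v1 has_real_derivative (- (lam^2 * q t * v t))) (at t)" for t
  proof -
    have "(v1 has_real_derivative (- sin (\<alpha> t) * w t * P t + cos (\<alpha> t) * P' t) - (cos (\<alpha> t) * w t * Q t + sin (\<alpha> t) * Q' t)) (at t)"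
      unfolding v1_def using DERIV_diff[OF DERIV_mult[OF dca dP] DERIV_mult[OF dsa dQ], of t]
      by (simp add: algebra_simps)
    moreover have "(- sin (\<alpha> t) * w t * P t + cos (\<alpha> t) * P' t) - (cos (\<alpha> t) * w t * Q t + sin (\<alpha> t) * Q' t) = - (lam^2 * q t * v t)"
      unfolding v_def P_def Q_def P'_def Q'_def W2e R_sq using R_pos[of t] by (simp add: field_simps eval_nat_numeral)
    ultimately show ?thesis by simp
  qed
  have uv: "u = (\<lambda>t. cos (\<alpha> t) / sqrt \<bar>deriv \<alpha> t\<bar>)" "v = (\<lambda>t. sin (\<alpha> t) / sqrt \<bar>deriv \<alpha> t\<bar>)"
    unfolding u_def v_def R_def dal using wpos by (auto simp: less_imp_le)
  have wr: "u t * v1 t - u1 t * v t = 1" for t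
  proof -
    have "u t * v1 t - u1 t * v t = P t / R t"
      unfolding u_def v_def u1_def v1_def
      by (simp add: algebra_simps power2_eq_square add_divide_distrib diff_divide_distrib)
         (simp add: add_divide_distrib[symmetric] distrib_left[symmetric])
    also have "\<dots> = 1" unfolding P_def using R_pos[of t] R_sq[of t] by (simp add: power2_eq_square)
    finally show ?thesis .
  qed
  have within: "(f has_real_derivative D) (at t) \<Longrightarrow> (f has_real_derivative D) (at t within {0..1})" for f D t
    by (rule has_field_derivative_at_within)
  have ode_u: "is_ode_sol lam q u" unfolding is_ode_sol_def
    by (rule exI[of _ u1], rule exI[of _ "\<lambda>t. - (lam^2 * q t * u t)"]) (auto intro!: within du du1)
  have ode_v: "is_ode_sol lam q v" unfolding is_ode_sol_def
    by (rule exI[of _ v1], rule exI[of _ "\<lambda>t. - (lam^2 * q t * v t)"]) (auto intro!: within dv dv1)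
  have indep: "a = 0 \<and> b = 0" if H: "\<forall>t\<in>{0..1}. a * u t + b * v t = 0" for a b
  proof -
    have "a * u 0 + b * v 0 = 0" using H by auto
    then have a0': "a = 0" unfolding u_def v_def a0 using R_pos[of 0] by simp
    have "isCont \<alpha> 0" using d\<alpha> by (rule DERIV_isCont)
    then have "\<alpha> \<midarrow>0\<rightarrow> \<alpha> 0" by (simp add: isCont_def)
    then obtain s where s: "s > 0" "\<And>x. x \<noteq> 0 \<and> norm (x - 0) < s \<longrightarrow> norm (\<alpha> x - \<alpha> 0) < pi"
      using LIM_D[of \<alpha> "\<alpha> 0" 0 pi] pi_gt_zero by blast
    define t where "t = min (s/2) 1"
    have t: "0 < t" "t \<le> 1" "t < s" using s(1) by (auto simp: t_def)
    have at_lt: "\<alpha> t < pi" using s(2)[of t] t by (auto simp: a0)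
    have at_gt: "\<alpha> 0 < \<alpha> t"
      using d\<alpha> wpos t(1) by (intro DERIV_pos_imp_increasing[of 0 t \<alpha>]) blast+
    have sp: "sin (\<alpha> t) > 0" using at_lt at_gt a0 by (intro sin_gt_zero) auto
    have "a * u t + b * v t = 0" using H t by auto
    then have "b * (sin (\<alpha> t) / R t) = 0" using a0' by (simp add: v_def)
    then have "b = 0" using sp R_pos[of t] by simp
    with a0' show ?thesis by simp
  qed
  have span: "\<exists>a b. \<forall>t\<in>{0..1}. y t = a * u t + b * v t" if Y: "is_ode_sol lam q y" for y
  proof -
    obtain y' y'' where Yd: "\<And>t. t \<in> {0..1} \<Longrightarrow> (y has_real_derivative y' t) (at t within {0..1}) \<and>
        (y' has_real_derivative y'' t) (at t within {0..1}) \<and> y'' t + lam^2 * q t * y t = 0"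
      using Y unfolding is_ode_sol_def by blast
    have const: "\<exists>c. \<forall>t\<in>{0..1}. y t * f1 t - y' t * f t = c"
      if df: "\<And>t. (f has_real_derivative f1 t) (at t)"
        and df1: "\<And>t. (f1 has_real_derivative (- (lam^2 * q t * f t))) (at t)" for f f1
    proof (rule has_field_derivative_zero_constant)
      show "convex {0..1::real}" by simp
      fix t :: real assume t: "t \<in> {0..1}"
      have "((\<lambda>t. y t * f1 t - y' t * f t) has_real_derivative
          (y' t * f1 t + (- (lam^2 * q t * f t)) * y t) - (y'' t * f t + f1 t * y' t)) (at t within {0..1})"
        using Yd[OF t] by (intro DERIV_diff DERIV_mult within[OF df] within[OF df1]) auto
      moreover have "(y' t * f1 t + (- (lam^2 * q t * f t)) * y t) - (y'' t * f t + f1 t * y' t) = 0"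
        using Yd[OF t] by (simp add: algebra_simps eq_neg_iff_add_eq_0[symmetric])
      ultimately show "((\<lambda>t. y t * f1 t - y' t * f t) has_real_derivative 0) (at t within {0..1})" by simp
    qed
    obtain c1 where c1: "\<And>t. t \<in> {0..1} \<Longrightarrow> y t * u1 t - y' t * u t = c1"
      using const[OF du du1] by blast
    obtain c2 where c2: "\<And>t. t \<in> {0..1} \<Longrightarrow> y t * v1 t - y' t * v t = c2"
      using const[OF dv dv1] by blast
    have "y t = c2 * u t + (- c1) * v t" if t: "t \<in> {0..1}" for t
    proof -
      have "c2 * u t + (- c1) * v t = (y t * v1 t - y' t * v t) * u t - (y t * u1 t - y' t * u t) * v t"
        using c1[OF t] c2[OF t] by simp
      also have "\<dots> = y t * (u t * v1 t - u1 t * v t)" by (simp add: algebra_simps)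
      finally have "c2 * u t + (- c1) * v t = y t * (u t * v1 t - u1 t * v t)" .
      then show ?thesis using wr[of t] by simp
    qed
    then show ?thesis by blast
  qed
  show ?thesis
    unfolding is_phase_function_def is_sol_basis_def uv[symmetric]
    using ode_u ode_v indep span by blast
qed


theorem theorem3p2:
  fixes lam :: real and q \<sigma> :: "real \<Rightarrow> real"
  assumes lam_pos: "lam > 0"
    and q_smooth: "smooth_fun q"
    and q_pos: "\<forall>t. q t > 0"
    and x_onto: "surj (xmap q)"
    and sigma_L1: "integrable lborel \<sigma>"
    and sigma_cont: "continuous_on UNIV \<sigma>"
    and sigma_eq: "\<forall>x. \<sigma> x = Sop lam (Top lam \<sigma>) x + pfun q x"
  shows
    "let \<delta> = Top lam \<sigma>;
         \<delta>t = (\<lambda>t. \<delta> (xmap q t));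
         \<alpha> = (\<lambda>t. lam * sint 0 t (\<lambda>u. sqrt (q u) * exp (\<delta> (xmap q u) / 2)));
         pt = (\<lambda>t. (1 / q t) * (5/4 * (deriv q t / q t)^2 - deriv (deriv q) t / q t))
     in (Ck 2 \<delta> \<and>
         (\<forall>x. deriv (deriv \<delta>) x - 1/4 * (deriv \<delta> x)^2 + 4 * lam^2 * (exp (\<delta> x) - 1) = pfun q x))
      \<and> (Ck 2 \<delta>t \<and>
         (\<forall>t. deriv (deriv \<delta>t) t - deriv q t / (2 * q t) * deriv \<delta>t t - 1/4 * (deriv \<delta>t t)^2
              + 4 * lam^2 * q t * (exp (\<delta>t t) - 1) = q t * pt t))
      \<and> (Ck 3 \<alpha> \<and>
         (\<forall>t. (deriv \<alpha> t)^2 = lam^2 * q t - 1/2 * (deriv (deriv (deriv \<alpha>)) t / deriv \<alpha> t)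
              + 3/4 * (deriv (deriv \<alpha>) t / deriv \<alpha> t)^2))
      \<and> is_phase_function lam q \<alpha>"
  proof -
  interpret qsetup q using q_smooth q_pos x_onto by unfold_locales auto
  obtain d1 where dd1: "\<And>x. (Top lam \<sigma> has_real_derivative d1 x) (at x)"
    and dd2: "\<And>x. (d1 has_real_derivative (\<sigma> x - 4*lam^2 * Top lam \<sigma> x)) (at x)"
    using delta_props[OF lam_pos sigma_L1 sigma_cont] by blast
  have cT: "continuous_on UNIV (Top lam \<sigma>)"
    using dd1 by (meson DERIV_isCont continuous_at_imp_continuous_on)
  have cd2: "continuous_on UNIV (\<lambda>x. \<sigma> x - 4*lam^2 * Top lam \<sigma> x)"
    by (auto intro!: continuous_intros sigma_cont cT)
  note C1 = Ck2I[OF dd1 dd2 cd2]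
  have eq1: "\<sigma> x - 4*lam^2 * Top lam \<sigma> x - 1/4 * (d1 x)^2 + 4 * lam^2 * (exp (Top lam \<sigma> x) - 1) = pfun q x" for x
    using sigma_eq[rule_format, of x] C1(2) by (simp add: Sop_def algebra_simps)
  have P1: "Ck 2 (Top lam \<sigma>) \<and>
         (\<forall>x. deriv (deriv (Top lam \<sigma>)) x - 1/4 * (deriv (Top lam \<sigma>) x)^2 + 4 * lam^2 * (exp (Top lam \<sigma> x) - 1) = pfun q x)"
    using C1 eq1 by simp
  note P2 = part2[OF dd1 dd2 cd2 eq1]
  note C2 = Ck2I[OF P2(1) P2(2) P2(3)]
  note P3 = part3[OF lam_pos P2(1) P2(2) P2(3) P2(4)]
  note C3 = Ck3I[OF P3(1) P3(2) P3(3) P3(4)]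
  have PH: "is_phase_function lam q (\<lambda>t. lam * sint 0 t (\<lambda>u. sqrt (q u) * exp (Top lam \<sigma> (xmap q u) / 2)))"
    by (rule phase[OF P3(1) P3(2) P3(3) P3(5) P3(6) P3(7)])
  show ?thesis
    unfolding Let_def using P1 C2 P2(4) C3 P3(6) PH by simp
qed

end
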